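(* Consider the setting described in the context and suppose the stepsizes satisfy conditions (A), (B) and (C). Let $u^\star=(x^\star,y^\star)$ satisfy $0\in F(x^\star)+A^Ty^\star$ and $0\in G(y^\star)-Ax^\star$. Then there is a constant $C_L$ (possibly negative) such that the PDHG iterates satisfy $\|u_{k+1}-u^\star\|_{M_k}^2\ge C_L$ for all $k$.
   Context: Let $A\in\mathbb{R}^{M\times N}$, let $f$ and $g$ be convex functions on $\mathbb{R}^N$ and $\mathbb{R}^M$, and let $X\subset\mathbb{R}^N$, $Y\subset\mathbb{R}^M$ be convex sets; consider the saddle-point problem $\min_{x\in X}\max_{y\in Y} f(x)+y^TAx-g(y)$. Let $\chi_C$ denote the characteristic function of a set $C$ ($0$ on $C$, $+\infty$ off $C$), and let $F=\partial(f+\chi_X)$, $G=\partial(g+\chi_Y)$. It is assumed that the problem is feasible (such $u^\star$ exists) and that the minimizations below have solutions. The PDHG method with stepsizes $\tau_k,\sigma_k>0$ starts from $x_0,y_0$ and iterates $x_{k+1}=\arg\min_{x\in X} f(x)+\frac{1}{2\tau_k}\|x-(x_k-\tau_kA^Ty_k)\|^2$, $y_{k+1}=\arg\min_{y\in Y} g(y)+\frac{1}{2\sigma_k}\|y-(y_k+\sigma_kA(2x_{k+1}-x_k))\|^2$. Write $u_k=(x_k,y_k)$, $M_k=\begin{pmatrix}\tau_k^{-1}I & -A^T\\ -A & \sigma_k^{-1}I\end{pmatrix}$, $H_k=\begin{pmatrix}\tau_k^{-1}I & 0\\ 0 & \sigma_k^{-1}I\end{pmatrix}$, and for a symmetric (possibly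 indefinite) matrix $M$, $\|u\|_M^2:=u^TMu$. Let $\phi_k=\max\{(\tau_k-\tau_{k+1})/\tau_k,\ (\sigma_k-\sigma_{k+1})/\sigma_k,\ 0\}$. Conditions: (A) the sequences $\{\tau_k\}$ and $\{\sigma_k\}$ are bounded; (B) $\sum_{k\ge0}\phi_k<C_\phi<\infty$ for some constant $C_\phi$; (C) either (C1) there is a constant $L$ with $\tau_k\sigma_k<L<\rho(A^TA)^{-1}$ for all $k>0$ ($\rho$ = spectral radius), or (C2) either $X$ or $Y$ is bounded and there is $c\in(0,1)$ with $\|u_{k+1}-u_k\|_{M_k}^2\ge c\|u_{k+1}-u_k\|_{H_k}^2$ for all $k>0$. *)

theory Defs
  imports "HOL-Analysis.Analysis"
begin

text \<open>Subdifferential of the extended-valued function f + chi_C at x,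
  for a real-valued f (f + chi_C is +infinity off C).\<close>
definition subdiff_on :: "('a::real_inner \<Rightarrow> real) \<Rightarrow> 'a set \<Rightarrow> 'a \<Rightarrow> 'a set" where
  "subdiff_on f C x = {v. x \<in> C \<and> (\<forall>z\<in>C. f x + v \<bullet> (z - x) \<le> f z)}"

definition spectral_radius :: "real^'n^'n \<Rightarrow> real" where
  "spectral_radius B = Sup {cmod l | l. \<exists>v::complex^'n. v \<noteq> 0 \<and>
       (\<chi> i j. complex_of_real (B $ i $ j)) *v v = l *s v}"

text \<open>The (possibly indefinite) quadratic form u^T M u with
  M = [[tau^-1 I, -A^T], [-A, sigma^-1 I]], u = (x,y).\<close>
definition M_norm2 :: "real \<Rightarrow> real \<Rightarrow> real^'n^'m \<Rightarrow> real^'n \<Rightarrow> real^'m \<Rightarrow> real" where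
  "M_norm2 \<tau> \<sigma> A x y =
     inverse \<tau> * (x \<bullet> x) - x \<bullet> (transpose A *v y) - y \<bullet> (A *v x) + inverse \<sigma> * (y \<bullet> y)"

definition H_norm2 :: "real \<Rightarrow> real \<Rightarrow> real^'n \<Rightarrow> real^'m \<Rightarrow> real" where
  "H_norm2 \<tau> \<sigma> x y = inverse \<tau> * (x \<bullet> x) + inverse \<sigma> * (y \<bullet> y)"

end

theory Submission
  imports Defs
begin

lemma dot_transpose: "(x::real^'n) \<bullet> (transpose (A::real^'n^'m) *v y) = (A *v x) \<bullet> y"
proof -
  have "transpose A *v y = y v* A"
    by (metis transpose_transpose vector_transpose_matrix)
  thus ?thesis by (metis inner_commute dot_lmul_matrix)
qed

lemma eig_bound:
  fixes B :: "real^'n^'n" and v :: "complex^'n" and l :: complex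
  assumes "v \<noteq> 0" "(\<chi> i j. complex_of_real (B $ i $ j)) *v v = l *s v"
  shows "cmod l \<le> (\<Sum>i\<in>UNIV. \<Sum>j\<in>UNIV. \<bar>B$i$j\<bar>)"
proof -
  obtain i where i: "\<forall>j. cmod (v$j) \<le> cmod (v$i)"
  proof -
    have "Max (range (\<lambda>j. cmod (v$j))) \<in> range (\<lambda>j. cmod (v$j))"
      by (rule Max_in) auto
    then obtain i where "Max (range (\<lambda>j. cmod (v$j))) = cmod (v$i)" by (metis imageE)
    moreover have "\<forall>j. cmod (v$j) \<le> Max (range (\<lambda>j. cmod (v$j)))" by auto
    ultimately show ?thesis using that by auto
  qed
  have vi: "cmod (v$i) > 0"
  proof (rule ccontr)
    assume "\<not> ?thesis"
    hence "\<forall>j. v$j = 0" using i by (metis norm_le_zero_iff order.trans not_less)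
    thus False using assms(1) by (simp add: vec_eq_iff)
  qed
  have "l * v$i = (\<Sum>j\<in>UNIV. complex_of_real (B$i$j) * v$j)"
    using arg_cong[OF assms(2), of "\<lambda>w. w$i"] by (simp add: matrix_vector_mult_def)
  hence "cmod l * cmod (v$i) \<le> (\<Sum>j\<in>UNIV. \<bar>B$i$j\<bar> * cmod (v$j))"
    by (metis (no_types, lifting) norm_mult norm_of_real norm_sum sum.cong)
  also have "\<dots> \<le> (\<Sum>j\<in>UNIV. \<bar>B$i$j\<bar> * cmod (v$i))"
    by (intro sum_mono mult_left_mono) (auto simp: i)
  also have "\<dots> = (\<Sum>j\<in>UNIV. \<bar>B$i$j\<bar>) * cmod (v$i)" by (simp add: sum_distrib_right)
  finally have "cmod l \<le> (\<Sum>j\<in>UNIV. \<bar>B$i$j\<bar>)" using vi by simp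
  also have "\<dots> \<le> (\<Sum>i\<in>UNIV. \<Sum>j\<in>UNIV. \<bar>B$i$j\<bar>)"
    by (rule member_le_sum) (auto intro: sum_nonneg)
  finally show ?thesis .
qed

lemma psd_zero:
  fixes bb qq :: real
  assumes "\<And>t. 0 \<le> 2 * t * bb + t^2 * qq" "qq \<ge> 0"
  shows "bb = 0"
proof (rule ccontr)
  assume "bb \<noteq> 0"
  define t where "t = - bb / (qq + 1)"
  have "0 \<le> 2 * t * bb + t^2 * qq" by (rule assms(1))
  hence "0 \<le> (qq+1)^2 * (2 * t * bb + t^2 * qq)" by simp
  also have "(qq+1)^2 * (2 * t * bb + t^2 * qq) = bb^2 * (- qq - 2)"
  proof -
    have q1: "qq + 1 \<noteq> 0" using assms(2) by simp
    have "(qq+1)^2 * (2 * t * bb + t^2 * qq) = (qq+1)^2 * (2 * t * bb) + ((qq+1) * t)^2 * qq"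
      by (simp add: algebra_simps power2_eq_square)
    also have "(qq+1) * t = - bb" using q1 unfolding t_def by simp
    also have "(qq+1)^2 * (2 * t * bb) = 2 * (qq+1) * bb * ((qq+1) * t)" by (simp add: power2_eq_square)
    also have "(qq+1) * t = - bb" using q1 unfolding t_def by simp
    finally show ?thesis by (simp add: algebra_simps power2_eq_square)
  qed
  finally show False using \<open>bb \<noteq> 0\<close> assms(2)
    by (smt (verit) mult_pos_neg zero_less_power2)
qed

lemma norm_bound_spec:
  fixes A :: "real^'n^'m"
  shows "(A *v u) \<bullet> (A *v u) \<le> spectral_radius (transpose A ** A) * (u \<bullet> u)"
proof -
  define h where "h = (\<lambda>u. (A *v u) \<bullet> (A *v u))"
  have cont: "continuous_on (sphere 0 1) h"
    unfolding h_def by (intro continuous_intros linear_continuous_on) auto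
  obtain i :: 'n where True by auto
  have ne: "sphere (0::real^'n) 1 \<noteq> {}"
    using norm_axis_1[of i] by (metis dist_0_norm mem_sphere empty_iff)
  obtain v where v: "v \<in> sphere 0 1" and vmax: "\<forall>y\<in>sphere 0 1. h y \<le> h v"
    using continuous_attains_sup[OF compact_sphere ne cont] by blast
  define lam where "lam = h v"
  have vv: "v \<bullet> v = 1" using v by (simp add: dot_square_norm)
  have hscale: "h (c *\<^sub>R w) = c^2 * h w" for c w
    unfolding h_def by (simp add: matrix_vector_mult_scaleR power2_eq_square)
  have bnd: "h u \<le> lam * (u \<bullet> u)" for u
  proof (cases "u = 0")
    case True thus ?thesis by (simp add: h_def)
  next
    case False
    have "(inverse (norm u)) *\<^sub>R u \<in> sphere 0 1" using False by (simp)
    hence "h ((inverse (norm u)) *\<^sub>R u) \<le> lam" using vmax lam_def by blast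
    hence "(inverse (norm u))^2 * h u \<le> lam" by (simp add: hscale)
    hence "h u \<le> lam * (norm u)^2" using False
      by (simp add: field_simps power2_eq_square)
    thus ?thesis by (simp add: dot_square_norm)
  qed
  have eig: "(transpose A ** A) *v v = lam *\<^sub>R v"
  proof -
    have orth: "lam * (v \<bullet> w) - (A *v v) \<bullet> (A *v w) = 0" for w
    proof (rule psd_zero)
      show "0 \<le> lam * (w \<bullet> w) - (A *v w) \<bullet> (A *v w)" using bnd[of w] by (simp add: h_def)
      fix t
      have "h (v + t *\<^sub>R w) \<le> lam * ((v + t *\<^sub>R w) \<bullet> (v + t *\<^sub>R w))" by (rule bnd)
      moreover have "h (v + t *\<^sub>R w) = lam + 2 * t * ((A *v v) \<bullet> (A *v w)) + t^2 * ((A *v w) \<bullet> (A *v w))"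
        unfolding h_def lam_def[unfolded h_def]
        by (simp add: matrix_vector_right_distrib matrix_vector_mult_scaleR inner_add_left inner_add_right
            inner_commute power2_eq_square algebra_simps)
      moreover have "(v + t *\<^sub>R w) \<bullet> (v + t *\<^sub>R w) = 1 + 2 * t * (v \<bullet> w) + t^2 * (w \<bullet> w)"
        using vv by (simp add: inner_add_left inner_add_right inner_commute power2_eq_square algebra_simps)
      ultimately have "lam + 2 * t * ((A *v v) \<bullet> (A *v w)) + t^2 * ((A *v w) \<bullet> (A *v w)) \<le> lam * (1 + 2 * t * (v \<bullet> w) + t^2 * (w \<bullet> w))"
        by simp
      thus "0 \<le> 2 * t * (lam * (v \<bullet> w) - (A *v v) \<bullet> (A *v w)) + t^2 * (lam * (w \<bullet> w) - (A *v w) \<bullet> (A *v w))"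
        by (simp add: algebra_simps)
    qed
    define z where "z = lam *\<^sub>R v - (transpose A ** A) *v v"
    have "(A *v v) \<bullet> (A *v w) = w \<bullet> ((transpose A ** A) *v v)" for w
    proof -
      have "(transpose A ** A) *v v = transpose A *v (A *v v)" by (simp add: matrix_vector_mul_assoc)
      thus ?thesis using dot_transpose[of w A "A *v v"] by (simp add: inner_commute)
    qed
    hence "(A *v v) \<bullet> (A *v z) = z \<bullet> ((transpose A ** A) *v v)" by blast
    hence "z \<bullet> z = lam * (v \<bullet> z) - (A *v v) \<bullet> (A *v z)"
      by (simp add: z_def inner_diff_left inner_commute)
    hence "z \<bullet> z = 0" using orth by simp
    thus ?thesis unfolding z_def by simp
  qed
  define cv where "cv = (\<chi> i. complex_of_real (v$i))"
  have cvne: "cv \<noteq> 0"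
  proof
    assume "cv = 0"
    hence "v = 0" unfolding cv_def by (simp add: vec_eq_iff)
    thus False using vv by simp
  qed
  have ceig: "(\<chi> i j. complex_of_real ((transpose A ** A) $ i $ j)) *v cv = complex_of_real lam *s cv"
  proof -
    have "((transpose A ** A) *v v) $ k = lam * v $ k" for k using eig by simp
    thus ?thesis unfolding cv_def
      by (simp add: vec_eq_iff matrix_vector_mult_def vector_scalar_mult_def flip: of_real_mult of_real_sum)
  qed
  have lam0: "lam \<ge> 0" unfolding lam_def h_def by simp
  have "lam \<le> spectral_radius (transpose A ** A)"
    unfolding spectral_radius_def
  proof (rule cSup_upper)
    show "lam \<in> {cmod l |l. \<exists>v::complex^'n. v \<noteq> 0 \<and> (\<chi> i j. complex_of_real ((transpose A ** A) $ i $ j)) *v v = l *s v}"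
      using cvne ceig lam0 by force
    show "bdd_above {cmod l |l. \<exists>v::complex^'n. v \<noteq> 0 \<and> (\<chi> i j. complex_of_real ((transpose A ** A) $ i $ j)) *v v = l *s v}"
      using eig_bound unfolding bdd_above_def by blast
  qed
  hence "h u \<le> spectral_radius (transpose A ** A) * (u \<bullet> u)"
    using bnd[of u] by (smt (verit) inner_ge_zero mult_right_mono)
  thus ?thesis by (simp add: h_def)
qed

lemma M_eq: "M_norm2 t s (A::real^'n^'m) dx dy = inverse t * (dx \<bullet> dx) - 2 * ((A *v dx) \<bullet> dy) + inverse s * (dy \<bullet> dy)"
  unfolding M_norm2_def dot_transpose by (simp add: inner_commute)

lemma quad_lb:
  fixes s B p c n Z :: real
  assumes "0<s" "s\<le>B" "\<bar>p\<bar> \<le> c*n" "0\<le>n" "0\<le>c" "0\<le>Z"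
  shows "-(c^2*B) \<le> Z - 2*p + inverse s * n^2"
proof -
  have B: "B > 0" using assms by simp
  have "inverse B * n^2 \<le> inverse s * n^2"
    using assms by (intro mult_right_mono le_imp_inverse_le) auto
  moreover have "inverse B * n^2 - 2*c*n + c^2*B = inverse B * (n - c*B)^2"
    using B by (simp add: field_simps power2_eq_square)
  moreover have "inverse B * (n - c*B)^2 \<ge> 0" using B by simp
  ultimately show ?thesis using assms by linarith
qed

lemma C1_lb:
  fixes A :: "real^'n^'m"
  assumes "t>0" "s>0" "t * s < L" "L * spectral_radius (transpose A ** A) < 1"
  shows "0 \<le> M_norm2 t s A dx dy"
proof -
  define r where "r = spectral_radius (transpose A ** A)"
  define X where "X = dx \<bullet> dx"
  define Y where "Y = dy \<bullet> dy"
  define p where "p = (A *v dx) \<bullet> dy"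
  have X0: "X \<ge> 0" and Y0: "Y \<ge> 0" unfolding X_def Y_def by auto
  have rts: "r * (t * s) \<le> 1"
  proof (cases "r \<le> 0")
    case True thus ?thesis using assms by (smt (verit) mult_nonpos_nonneg mult_pos_pos)
  next
    case False
    hence "r * (t * s) \<le> r * L" using assms by (intro mult_left_mono) auto
    thus ?thesis using assms unfolding r_def by (simp add: mult.commute)
  qed
  have "(A *v dx) \<bullet> (A *v dx) \<le> r * X" unfolding r_def X_def by (rule norm_bound_spec)
  also have "r * X \<le> X / (t * s)"
  proof -
    have ts: "t * s > 0" using assms by simp
    have "r \<le> 1 / (t * s)" using rts ts by (simp add: pos_le_divide_eq)
    hence "r * X \<le> (1 / (t * s)) * X" using X0 by (rule mult_right_mono)
    thus ?thesis by simp
  qed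
  finally have h: "(A *v dx) \<bullet> (A *v dx) \<le> X / (t * s)" .
  have "\<bar>p\<bar> \<le> norm (A *v dx) * norm dy" unfolding p_def by (rule Cauchy_Schwarz_ineq2)
  hence "\<bar>p\<bar>^2 \<le> (norm (A *v dx) * norm dy)^2" by (rule power_mono) simp
  hence "p^2 \<le> (norm (A *v dx) * norm dy)^2" by simp
  also have "\<dots> = ((A *v dx) \<bullet> (A *v dx)) * Y"
    unfolding Y_def by (simp add: power_mult_distrib dot_square_norm[symmetric])
  also have "\<dots> \<le> X / (t * s) * Y" using h Y0 by (rule mult_right_mono)
  finally have p2: "p^2 \<le> X * Y / (t * s)" by simp
  have "(2*\<bar>p\<bar>)^2 \<le> (X/t + Y/s)^2"
  proof -
    have "(X/t + Y/s)^2 = (X/t - Y/s)^2 + 4 * (X*Y/(t * s))" using assms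
      by (simp add: field_simps power2_eq_square)
    moreover have "(2*\<bar>p\<bar>)^2 = 4 * p^2" by (simp add: power2_eq_square)
    ultimately show ?thesis using p2 by (smt (verit) zero_le_power2)
  qed
  hence "2*\<bar>p\<bar> \<le> X/t + Y/s"
    by (rule power2_le_imp_le) (use X0 Y0 assms in simp)
  hence "2*p \<le> X/t + Y/s" by linarith
  thus ?thesis unfolding M_eq
    by (simp add: X_def Y_def p_def divide_inverse mult.commute)
qed



theorem mainTheorem4:
  fixes A :: "real^'n^'m"
    and f :: "real^'n \<Rightarrow> real" and g :: "real^'m \<Rightarrow> real"
    and X :: "(real^'n) set" and Y :: "(real^'m) set"
    and \<tau> \<sigma> :: "nat \<Rightarrow> real"
    and x :: "nat \<Rightarrow> real^'n" and y :: "nat \<Rightarrow> real^'m"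
    and xs :: "real^'n" and ys :: "real^'m"
  assumes f_convex: "convex_on UNIV f" and g_convex: "convex_on UNIV g"
    and X_convex: "convex X" and Y_convex: "convex Y"
    and tau_pos: "\<And>k. \<tau> k > 0" and sigma_pos: "\<And>k. \<sigma> k > 0"
    and x_step: "\<And>k. is_arg_min
          (\<lambda>z. f z + (1 / (2 * \<tau> k)) * (norm (z - (x k - \<tau> k *\<^sub>R (transpose A *v y k))))\<^sup>2)
          (\<lambda>z. z \<in> X) (x (Suc k))"
    and y_step: "\<And>k. is_arg_min
          (\<lambda>w. g w + (1 / (2 * \<sigma> k)) *
               (norm (w - (y k + \<sigma> k *\<^sub>R (A *v (2 *\<^sub>R x (Suc k) - x k)))))\<^sup>2)
          (\<lambda>w. w \<in> Y) (y (Suc k))"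
    and condA: "\<exists>B. \<forall>k. \<tau> k \<le> B \<and> \<sigma> k \<le> B"
    and condB: "\<exists>C\<phi>. \<forall>n. (\<Sum>k<n. max (max ((\<tau> k - \<tau> (Suc k)) / \<tau> k)
                                             ((\<sigma> k - \<sigma> (Suc k)) / \<sigma> k)) 0) < C\<phi>"
    and condC:
      "(\<exists>L. (\<forall>k>0. \<tau> k * \<sigma> k < L) \<and> L * spectral_radius (transpose A ** A) < 1)
       \<or> ((bounded X \<or> bounded Y) \<and>
          (\<exists>c. 0 < c \<and> c < 1 \<and>
             (\<forall>k>0. M_norm2 (\<tau> k) (\<sigma> k) A (x (Suc k) - x k) (y (Suc k) - y k)
                    \<ge> c * H_norm2 (\<tau> k) (\<sigma> k) (x (Suc k) - x k) (y (Suc k) - y k))))"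
    and saddle_x: "(0::real^'n) \<in> (\<lambda>v. v + transpose A *v ys) ` subdiff_on f X xs"
    and saddle_y: "(0::real^'m) \<in> (\<lambda>w. w - A *v xs) ` subdiff_on g Y ys"
  shows "\<exists>CL. \<forall>k. M_norm2 (\<tau> k) (\<sigma> k) A (x (Suc k) - xs) (y (Suc k) - ys) \<ge> CL"
  proof -
  obtain B where B: "\<And>k. \<tau> k \<le> B \<and> \<sigma> k \<le> B" using condA by blast
  define Mk where "Mk k = M_norm2 (\<tau> k) (\<sigma> k) A (x (Suc k) - xs) (y (Suc k) - ys)" for k
  have xin: "x (Suc k) \<in> X" for k using x_step[of k] by (simp add: is_arg_min_def)
  have yin: "y (Suc k) \<in> Y" for k using y_step[of k] by (simp add: is_arg_min_def)
  from condC consider (c1) "\<exists>L. (\<forall>k>0. \<tau> k * \<sigma> k < L) \<and> L * spectral_radius (transpose A ** A) < 1"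
    | (c2) "bounded X \<or> bounded Y" by blast
  then show ?thesis
  proof cases
    case c1
    from c1 obtain L where L: "\<forall>k>0. \<tau> k * \<sigma> k < L" "L * spectral_radius (transpose A ** A) < 1" by blast
    have "min 0 (Mk 0) \<le> Mk k" for k
    proof (cases "k = 0")
      case True thus ?thesis by simp
    next
      case False
      hence "0 \<le> Mk k" unfolding Mk_def using L tau_pos sigma_pos by (intro C1_lb) auto
      thus ?thesis by simp
    qed
    thus ?thesis unfolding Mk_def by blast
  next
    case c2
    thus ?thesis
    proof
      assume "bounded X"
      then obtain R where R: "\<forall>z\<in>X. norm z \<le> R" by (auto simp: bounded_iff)
      obtain K where K: "K > 0" "\<And>z. norm (A *v z) \<le> norm z * K"
        using bounded_linear.pos_bounded[OF matrix_vector_mul_bounded_linear[of A]] by blast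
      define c where "c = (R + norm xs) * K"
      have c0: "c \<ge> 0" unfolding c_def using R xin[of 0] K
        by (smt (verit) mult_nonneg_nonneg norm_ge_zero)
      have "-(c^2*B) \<le> Mk k" for k
      proof -
        define dx where "dx = x (Suc k) - xs"
        define dy where "dy = y (Suc k) - ys"
        have "norm dx \<le> R + norm xs" unfolding dx_def using R xin[of k]
          by (smt (verit) norm_triangle_ineq4)
        hence nA: "norm (A *v dx) \<le> c" unfolding c_def using K
          by (smt (verit) mult_right_mono)
        have "\<bar>(A *v dx) \<bullet> dy\<bar> \<le> c * norm dy"
          using Cauchy_Schwarz_ineq2[of "A *v dx" dy] nA by (smt (verit) mult_right_mono norm_ge_zero)
        hence "-(c^2*B) \<le> inverse (\<tau> k) * (dx \<bullet> dx) - 2 * ((A *v dx) \<bullet> dy) + inverse (\<sigma> k) * (norm dy)^2"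
          using sigma_pos[of k] B[of k] c0 tau_pos[of k] by (intro quad_lb) auto
        thus ?thesis unfolding Mk_def M_eq dx_def[symmetric] dy_def[symmetric]
          by (simp add: dot_square_norm[symmetric] power2_norm_eq_inner)
      qed
      thus ?thesis unfolding Mk_def by blast
    next
      assume "bounded Y"
      then obtain R where R: "\<forall>z\<in>Y. norm z \<le> R" by (auto simp: bounded_iff)
      obtain K where K: "K > 0" "\<And>z. norm (transpose A *v z) \<le> norm z * K"
        using bounded_linear.pos_bounded[OF matrix_vector_mul_bounded_linear[of "transpose A"]] by blast
      define c where "c = (R + norm ys) * K"
      have c0: "c \<ge> 0" unfolding c_def using R yin[of 0] K
        by (smt (verit) mult_nonneg_nonneg norm_ge_zero)
      have "-(c^2*B) \<le> Mk k" for k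
      proof -
        define dx where "dx = x (Suc k) - xs"
        define dy where "dy = y (Suc k) - ys"
        have "norm dy \<le> R + norm ys" unfolding dy_def using R yin[of k]
          by (smt (verit) norm_triangle_ineq4)
        hence nA: "norm (transpose A *v dy) \<le> c" unfolding c_def using K
          by (smt (verit) mult_right_mono)
        have "\<bar>dx \<bullet> (transpose A *v dy)\<bar> \<le> c * norm dx"
          using Cauchy_Schwarz_ineq2[of dx "transpose A *v dy"] nA
          by (smt (verit) mult.commute mult_right_mono norm_ge_zero)
        hence "\<bar>(A *v dx) \<bullet> dy\<bar> \<le> c * norm dx" by (simp only: dot_transpose)
        hence "-(c^2*B) \<le> inverse (\<sigma> k) * (dy \<bullet> dy) - 2 * ((A *v dx) \<bullet> dy) + inverse (\<tau> k) * (norm dx)^2"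
          using sigma_pos[of k] B[of k] c0 tau_pos[of k] by (intro quad_lb) auto
        thus ?thesis unfolding Mk_def M_eq dx_def[symmetric] dy_def[symmetric]
          by (simp add: dot_square_norm[symmetric] power2_norm_eq_inner algebra_simps)
      qed
      thus ?thesis unfolding Mk_def by blast
    qed
  qed
qed

end
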